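(* For every nonnegative integer $L$, \[ G(L+1,L;1/2,2,2)=\sum_{j\in\mathbb{Z}}(-1)^j q^{\frac{1}{2}j(5j+3)}\begin{bmatrix}2L+1\\ L-2j\end{bmatrix} =\sum_{n\geq 0}q^{n(n+1)}\begin{bmatrix}L\\ n\end{bmatrix}. \]
   Context: $(x;q)_n=\prod_{i=0}^{n-1}(1-xq^i)$, $(q)_n=(q;q)_n$. The $q$-binomial coefficient is $\begin{bmatrix}n\\ m\end{bmatrix}=\frac{(q)_n}{(q)_m(q)_{n-m}}$ if $m$ and $n-m$ are nonnegative integers and $0$ otherwise. For integers $N,M$, a positive integer $K$ and rationals $\alpha,\beta$, $G(N,M;\alpha,\beta,K)=\sum_{j\in\mathbb{Z}}(-1)^jq^{\frac12 Kj((\alpha+\beta)j+\alpha-\beta)}\begin{bmatrix}M+N\\ N-Kj\end{bmatrix}$. *)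

theory Defs
  imports Complex_Main
begin

definition qpoch :: "real \<Rightarrow> real \<Rightarrow> nat \<Rightarrow> real" where
  "qpoch x q n = (\<Prod>i<n. 1 - x * q ^ i)"

definition qfac :: "real \<Rightarrow> nat \<Rightarrow> real" where
  "qfac q n = qpoch q q n"

definition qbinom :: "real \<Rightarrow> int \<Rightarrow> int \<Rightarrow> real" where
  "qbinom q n m =
     (if 0 \<le> m \<and> 0 \<le> n - m
      then qfac q (nat n) / (qfac q (nat m) * qfac q (nat (n - m)))
      else 0)"

text \<open>G(N,M;alpha,beta,K). The sum over all integers j is written as a finite sum over
  the j for which the q-binomial can be nonzero (all other terms vanish).\<close>
definition G :: "real \<Rightarrow> int \<Rightarrow> int \<Rightarrow> rat \<Rightarrow> rat \<Rightarrow> nat \<Rightarrow> real" where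
  "G q N M \<alpha> \<beta> K =
     (\<Sum>j \<in> {j::int. 0 \<le> N - int K * j \<and> N - int K * j \<le> M + N}.
        (-1) powi j *
        q powr (1/2 * real K * real_of_int j *
                 ((real_of_rat \<alpha> + real_of_rat \<beta>) * real_of_int j
                  + real_of_rat \<alpha> - real_of_rat \<beta>)) *
        qbinom q (M + N) (N - int K * j))"

end

theory Submission imports Defs begin

lemma neg1_powi: "((-1::real) powi j) = (if even j then 1 else -1)"
proof (cases "j \<ge> 0")
  case True
  then have "j = int (nat j)" by simp
  then have "(-1::real) powi j = (-1) ^ nat j" by (metis power_int_of_nat)
  then show ?thesis using True by (simp add: even_nat_iff)
next
  case False
  then have "j = - int (nat (-j))" by simp
  then have "(-1::real) powi j = inverse ((-1) ^ nat (-j))" by (metis power_int_minus power_int_of_nat)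
  moreover have "even j = even (nat (-j))" using False by (simp add: even_nat_iff)
  ultimately show ?thesis by simp
qed
context fixes q :: real assumes q0: "0 < q" and q1: "q < 1"
begin

lemma qfac_Suc: "qfac q (Suc n) = qfac q n * (1 - q ^ Suc n)"
  by (simp add: qfac_def qpoch_def)

lemma qfac_0: "qfac q 0 = 1" by (simp add: qfac_def qpoch_def)

lemma qfac_pos: "qfac q n > 0"
proof (induction n)
  case 0 then show ?case by (simp add: qfac_0)
next
  case (Suc n)
  have "q ^ Suc n < 1" using q0 q1 by (rule power_Suc_less_one)
  then show ?case using Suc by (simp add: qfac_Suc)
qed

definition C :: "nat \<Rightarrow> nat \<Rightarrow> real" where
  "C a b = qfac q (a + b) / (qfac q a * qfac q b)"

lemma C_alg:
  fixes X A B x y :: real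
  assumes "A > 0" "B > 0" "1 - x > 0" "1 - y > 0"
  shows "X * (1 - x * y) / (A * (1 - x) * (B * (1 - y))) = X / (A * (B * (1 - y))) + x * (X / (A * (1 - x) * B))"
proof -
  have "X / (A * (B * (1 - y))) + x * (X / (A * (1 - x) * B)) = 
     (X * (1-x) + x * X * (1 - y)) / (A * (1 - x) * (B * (1 - y)))"
    using assms by (simp add: add_divide_distrib)
  also have "X * (1-x) + x * X * (1 - y) = X * (1 - x*y)" by algebra
  finally show ?thesis by simp
qed

lemma C_pascal: "C (Suc a) (Suc b) = C a (Suc b) + q ^ Suc a * C (Suc a) b"
proof -
  have fa: "qfac q a > 0" and fb: "qfac q b > 0"
    using qfac_pos by auto
  have ha: "1 - q ^ Suc a > 0" and hb: "1 - q ^ Suc b > 0"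
    using power_Suc_less_one[OF q0 q1] by (simp_all del: power_Suc)
  have e1: "Suc a + Suc b = Suc (Suc (a + b))" "a + Suc b = Suc (a+b)" "Suc a + b = Suc (a+b)" by auto
  have e2: "q ^ Suc (Suc (a + b)) = q ^ Suc a * q ^ Suc b"
    by (simp add: power_add[symmetric])
  show ?thesis unfolding C_def e1
    unfolding qfac_Suc[of "Suc (a+b)"] qfac_Suc[of a] qfac_Suc[of b] e2
    using C_alg[OF fa fb ha hb] by simp
qed

lemma qbinom_C:
  assumes "0 \<le> k" "k \<le> n"
  shows "qbinom q n k = C (nat k) (nat (n - k))"
proof -
  have "nat k + nat (n-k) = nat n" using assms by (subst nat_add_distrib[symmetric]) auto
  then show ?thesis using assms by (simp add: qbinom_def C_def)
qed

lemma qbinom_out: "k < 0 \<or> n < k \<Longrightarrow> qbinom q n k = 0"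
  by (auto simp: qbinom_def)

lemma qbinom_nz: "qbinom q n k \<noteq> 0 \<Longrightarrow> 0 \<le> k \<and> k \<le> n"
  by (auto simp: qbinom_def split: if_splits)

lemma qbinom_sym: "qbinom q n k = qbinom q n (n - k)"
  by (auto simp: qbinom_def mult.commute)

lemma qbinom_0: "0 \<le> n \<Longrightarrow> qbinom q n 0 = 1"
  using qfac_pos[of "nat n"] by (simp add: qbinom_def qfac_0)

lemma qbinom_nn: "0 \<le> n \<Longrightarrow> qbinom q n n = 1"
  using qfac_pos[of "nat n"] by (simp add: qbinom_def qfac_0)

lemma qbinom_pascal1:
  assumes "1 \<le> n"
  shows "qbinom q n k = qbinom q (n-1) (k-1) + q powr (of_int k) * qbinom q (n-1) k"
proof -
  consider "k < 0" | "k = 0" | "k = n" | "n < k" | "0 < k \<and> k < n" by linarith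
  then show ?thesis
  proof cases
    case 1 then show ?thesis by (simp add: qbinom_out)
  next
    case 2 then show ?thesis using assms q0 by (simp add: qbinom_0 qbinom_out)
  next
    case 3 then show ?thesis using assms by (simp add: qbinom_nn qbinom_out)
  next
    case 4 then show ?thesis by (simp add: qbinom_out)
  next
    case 5
    define a where "a = nat (k - 1)"
    define b where "b = nat (n - k - 1)"
    have k: "k = int a + 1" and nk: "n - k = int b + 1" using 5 by (auto simp: a_def b_def)
    have n1: "nat k = Suc a" "nat (n-k) = Suc b" "nat (k-1) = a" "nat (n-1-k) = b"
      "nat (n-1-(k-1)) = Suc b" using k nk by auto
    have "qbinom q n k = C (Suc a) (Suc b)"
      using 5 by (subst qbinom_C) (auto simp: n1)
    moreover have "qbinom q (n-1) (k-1) = C a (Suc b)"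
      using 5 by (subst qbinom_C) (auto simp: n1)
    moreover have "qbinom q (n-1) k = C (Suc a) b"
      using 5 by (subst qbinom_C) (auto simp: n1)
    moreover have "q powr (of_int k) = q ^ Suc a"
    proof -
      have "(of_int k :: real) = real (Suc a)" using k by simp
      then show ?thesis by (simp only: powr_realpow[OF q0])
    qed
    ultimately show ?thesis by (simp add: C_pascal)
  qed
qed

lemma qbinom_pascal2:
  assumes "1 \<le> n"
  shows "qbinom q n k = qbinom q (n-1) k + q powr (of_int (n - k)) * qbinom q (n-1) (k-1)"
proof -
  have "qbinom q n k = qbinom q n (n-k)" by (rule qbinom_sym)
  also have "\<dots> = qbinom q (n-1) (n-k-1) + q powr (of_int (n-k)) * qbinom q (n-1) (n-k)"
    using assms by (rule qbinom_pascal1)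
  also have "qbinom q (n-1) (n-k-1) = qbinom q (n-1) k"
    by (subst qbinom_sym) simp
  also have "qbinom q (n-1) (n-k) = qbinom q (n-1) (k-1)"
    by (subst qbinom_sym) simp
  finally show ?thesis .
qed


definition supp :: "int \<Rightarrow> int \<Rightarrow> int set" where
  "supp N M = {j. 0 \<le> N - 2*j \<and> N - 2*j \<le> N + M}"

definition tm :: "int \<Rightarrow> int \<Rightarrow> int \<Rightarrow> int \<Rightarrow> real" where
  "tm b N M j = (-1) powi j * q powr (real_of_int (j*(5*j+b)) / 2) * qbinom q (N+M) (N - 2*j)"

definition h :: "int \<Rightarrow> int \<Rightarrow> int \<Rightarrow> real" where
  "h b N M = sum (tm b N M) (supp N M)"

lemma finite_supp: "finite (supp N M)"
proof -
  have "supp N M \<subseteq> {-\<bar>M\<bar>..\<bar>N\<bar>}" by (auto simp: supp_def)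
  then show ?thesis by (rule finite_subset) simp
qed

lemma h_any: "finite A \<Longrightarrow> supp N M \<subseteq> A \<Longrightarrow> h b N M = sum (tm b N M) A"
  unfolding h_def
  by (rule sum.mono_neutral_left) (auto simp: supp_def tm_def dest: qbinom_nz)

lemma alg1:
  fixes s E1 E2 E3 P Q1 Q2 :: real
  assumes "E1 * E2 = P * E3"
  shows "s * E1 * (Q1 + E2 * Q2) = s * E1 * Q1 + P * (s * E3 * Q2)"
proof -
  have "s * E1 * (Q1 + E2 * Q2) = s * E1 * Q1 + s * Q2 * (E1 * E2)" by (simp add: algebra_simps)
  also have "\<dots> = s * E1 * Q1 + P * (s * E3 * Q2)" using assms by simp
  finally show ?thesis .
qed

lemma tm_P1:
  assumes "1 \<le> N + M"
  shows "tm b N M j = tm b N (M-1) j + q powr (of_int M) * tm (b+4) (N-1) M j"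
proof -
  have pa: "qbinom q (N+M) (N-2*j) = qbinom q (N+M-1) (N-2*j)
      + q powr (of_int (N+M-(N-2*j))) * qbinom q (N+M-1) (N-2*j-1)"
    using qbinom_pascal2[OF assms] .
  have r1: "N+M-1 = N+(M-1)" "N+M-(N-2*j) = M+2*j" by simp_all
  have r2: "qbinom q (N+M-1) (N-2*j-1) = qbinom q ((N-1)+M) ((N-1)-2*j)"
    by (simp add: algebra_simps)
  have ex: "real_of_int (j*(5*j+b)) / 2 + real_of_int (M+2*j) = real_of_int M + real_of_int (j*(5*j+(b+4))) / 2"
    by (simp add: field_simps)
  have e: "q powr (real_of_int (j*(5*j+b)) / 2) * q powr (of_int (M+2*j))
      = q powr (of_int M) * q powr (real_of_int (j*(5*j+(b+4))) / 2)"
    by (simp only: powr_add[symmetric] ex)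
  show ?thesis unfolding tm_def pa r2 unfolding r1 by (rule alg1[OF e])
qed

lemma tm_P2:
  assumes "1 \<le> N + M"
  shows "tm b N M j = tm b (N-1) M j + q powr (of_int N) * tm (b-4) N (M-1) j"
proof -
  have pa: "qbinom q (N+M) (N-2*j) = qbinom q (N+M-1) (N-2*j-1)
      + q powr (of_int (N-2*j)) * qbinom q (N+M-1) (N-2*j)"
    using qbinom_pascal1[OF assms] .
  have r1: "qbinom q (N+M-1) (N-2*j) = qbinom q (N+(M-1)) (N-2*j)" by (simp add: algebra_simps)
  have r2: "qbinom q (N+M-1) (N-2*j-1) = qbinom q ((N-1)+M) ((N-1)-2*j)"
    by (simp add: algebra_simps)
  have ex: "real_of_int (j*(5*j+b)) / 2 + real_of_int (N-2*j) = real_of_int N + real_of_int (j*(5*j+(b-4))) / 2"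
    by (simp add: field_simps)
  have e: "q powr (real_of_int (j*(5*j+b)) / 2) * q powr (of_int (N-2*j))
      = q powr (of_int N) * q powr (real_of_int (j*(5*j+(b-4))) / 2)"
    by (simp only: powr_add[symmetric] ex)
  show ?thesis unfolding tm_def pa r2 r1 by (rule alg1[OF e])
qed

lemma P1:
  assumes "1 \<le> N + M" "M' = M - 1" "N' = N - 1" "b' = b + 4"
  shows "h b N M = h b N M' + q powr (of_int M) * h b' N' M"
proof -
  define A where "A = {-(\<bar>N\<bar>+\<bar>M\<bar>+1)..\<bar>N\<bar>+\<bar>M\<bar>+1}"
  have fA: "finite A" by (simp add: A_def)
  have s1: "supp N M \<subseteq> A" "supp N M' \<subseteq> A" "supp N' M \<subseteq> A"
    using assms by (auto simp: A_def supp_def)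
  have "h b N M = sum (tm b N M) A" by (rule h_any[OF fA s1(1)])
  also have "\<dots> = sum (\<lambda>j. tm b N M' j + q powr (of_int M) * tm b' N' M j) A"
    unfolding assms(2-4) by (rule sum.cong[OF refl], rule tm_P1[OF assms(1)])
  also have "\<dots> = sum (tm b N M') A + q powr (of_int M) * sum (tm b' N' M) A"
    by (simp add: sum.distrib sum_distrib_left)
  also have "\<dots> = h b N M' + q powr (of_int M) * h b' N' M"
    using h_any[OF fA s1(2)] h_any[OF fA s1(3)] by simp
  finally show ?thesis .
qed

lemma P2:
  assumes "1 \<le> N + M" "M' = M - 1" "N' = N - 1" "b' = b - 4"
  shows "h b N M = h b N' M + q powr (of_int N) * h b' N M'"
proof -
  define A where "A = {-(\<bar>N\<bar>+\<bar>M\<bar>+1)..\<bar>N\<bar>+\<bar>M\<bar>+1}"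
  have fA: "finite A" by (simp add: A_def)
  have s1: "supp N M \<subseteq> A" "supp N' M \<subseteq> A" "supp N M' \<subseteq> A"
    using assms by (auto simp: A_def supp_def)
  have "h b N M = sum (tm b N M) A" by (rule h_any[OF fA s1(1)])
  also have "\<dots> = sum (\<lambda>j. tm b N' M j + q powr (of_int N) * tm b' N M' j) A"
    unfolding assms(2-4) by (rule sum.cong[OF refl], rule tm_P2[OF assms(1)])
  also have "\<dots> = sum (tm b N' M) A + q powr (of_int N) * sum (tm b' N M') A"
    by (simp add: sum.distrib sum_distrib_left)
  also have "\<dots> = h b N' M + q powr (of_int N) * h b' N M'"
    using h_any[OF fA s1(2)] h_any[OF fA s1(3)] by simp
  finally show ?thesis .
qed

lemma h_reindex:
  assumes "\<And>j. j \<in> supp N M \<Longrightarrow> c - j \<in> supp N' M'"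
    and "\<And>j. tm b N M (c - j) = K * tm b' N' M' j"
  shows "h b N M = K * h b' N' M'"
proof -
  let ?g = "\<lambda>j::int. c - j"
  have inj: "inj_on ?g (supp N' M')" by (auto simp: inj_on_def)
  have sub: "supp N M \<subseteq> ?g ` supp N' M'"
  proof
    fix j assume "j \<in> supp N M"
    then have "c - j \<in> supp N' M'" by (rule assms(1))
    moreover have "j = ?g (c - j)" by simp
    ultimately show "j \<in> ?g ` supp N' M'" by blast
  qed
  have "h b N M = sum (tm b N M) (?g ` supp N' M')"
    by (rule h_any[OF _ sub]) (simp add: finite_supp)
  also have "\<dots> = sum (tm b N M \<circ> ?g) (supp N' M')" by (rule sum.reindex[OF inj])
  also have "\<dots> = sum (\<lambda>j. K * tm b' N' M' j) (supp N' M')"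
    by (simp add: assms(2))
  also have "\<dots> = K * h b' N' M'" by (simp add: h_def sum_distrib_left)
  finally show ?thesis .
qed

lemma Refl: "h b N M = h (-b) M N"
proof -
  have "h b N M = 1 * h (-b) M N"
  proof (rule h_reindex[where c=0])
    fix j assume "j \<in> supp N M" then show "0 - j \<in> supp M N" by (auto simp: supp_def)
  next
    fix j
    have s: "(-1::real) powi (0 - j) = (-1) powi j" by (simp add: neg1_powi)
    have ex: "real_of_int ((0-j)*(5*(0-j)+b)) / 2 = real_of_int (j*(5*j+(-b))) / 2"
      by (simp add: algebra_simps)
    have qb: "qbinom q (N+M) (N - 2*(0-j)) = qbinom q (M+N) (M - 2*j)"
      by (subst qbinom_sym) (simp add: algebra_simps)
    show "tm b N M (0 - j) = 1 * tm (-b) M N j" unfolding tm_def s ex qb by simp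
  qed
  then show ?thesis by simp
qed

lemma Shift:
  assumes "N' = M - 2" "M' = N + 2" "b' = 10 - b"
  shows "h b N M = - (q powr (real_of_int (5 - b) / 2)) * h b' N' M'"
proof (rule h_reindex[where c="-1"])
  fix j assume "j \<in> supp N M" then show "-1 - j \<in> supp N' M'" using assms by (auto simp: supp_def)
next
  fix j
  have s: "(-1::real) powi (-1 - j) = - ((-1) powi j)" by (simp add: neg1_powi)
  have ex: "real_of_int ((-1-j)*(5*(-1-j)+b)) / 2 = real_of_int (5 - b) / 2 + real_of_int (j*(5*j+b')) / 2"
    unfolding assms(3) by (simp add: field_simps)
  have qb: "qbinom q (N+M) (N - 2*(-1-j)) = qbinom q (N'+M') (N' - 2*j)"
    unfolding assms(1,2) by (subst qbinom_sym) (simp add: algebra_simps)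
  show "tm b N M (-1 - j) = - (q powr (real_of_int (5 - b) / 2)) * tm b' N' M' j"
    unfolding tm_def s ex qb powr_add by simp
qed


lemma recA:
  assumes "1 \<le> L"
  shows "h 1 L L = h 1 (L-1) (L-1) + q powr (of_int L) * h 3 (L-1) L"
proof -
  have a1: "h 1 L L = h 1 (L-1) L + q powr (of_int L) * h (-3) L (L-1)"
    by (rule P2) (use assms in auto)
  have a2: "h 1 (L-1) L = h 1 (L-1) (L-1) + q powr (of_int L) * h 5 (L-2) L"
    by (rule P1) (use assms in auto)
  have a3: "h (-3) L (L-1) = h 3 (L-1) L" using Refl[of "-3" L "L-1"] by simp
  have a4: "h 5 (L-2) L = - (q powr (real_of_int (5 - 5) / 2)) * h 5 (L-2) L"
    by (rule Shift) auto
  have a5: "h 5 (L-2) L = 0" using a4 q0 by simp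
  show ?thesis using a1 a2 a3 a5 by simp
qed

lemma recB:
  assumes "1 \<le> L"
  shows "h 3 L (L+1) = h 3 (L-1) L + q powr (of_int L) * (h 1 L L - h 3 (L-1) L)"
proof -
  have a1: "h 3 L (L+1) = h 3 (L-1) (L+1) + q powr (of_int L) * h (-1) L L"
    by (rule P2) (use assms in auto)
  have a2: "h 3 (L-1) (L+1) = h 3 (L-1) L + q powr (of_int (L+1)) * h 7 (L-2) (L+1)"
    by (rule P1) (use assms in auto)
  have a3: "h (-1) L L = h 1 L L" using Refl[of "-1" L L] by simp
  have a4: "h 7 (L-2) (L+1) = - (q powr (real_of_int (5 - 7) / 2)) * h 3 (L-1) L"
    by (rule Shift) auto
  have a5: "q powr (of_int (L+1)) * q powr (real_of_int (5 - 7) / 2) = q powr (of_int L)"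
  proof -
    have "real_of_int (L+1) + real_of_int (5 - 7) / 2 = real_of_int L" by simp
    then show ?thesis by (simp only: powr_add[symmetric])
  qed
  have "h 3 L (L+1) = h 3 (L-1) L + q powr (of_int L) * h 1 L L
        - (q powr (of_int (L+1)) * q powr (real_of_int (5 - 7) / 2)) * h 3 (L-1) L"
    using a1 a2 a3 a4 by (simp add: algebra_simps)
  then show ?thesis unfolding a5 by (simp add: algebra_simps)
qed

definition g :: "nat \<Rightarrow> nat \<Rightarrow> nat \<Rightarrow> real" where
  "g a L n = q ^ (n*n + a*n) * qbinom q (int L) (int n)"

definition F :: "nat \<Rightarrow> nat \<Rightarrow> real" where
  "F a L = (\<Sum>n\<le>L. g a L n)"

lemma g_top: "g a L (Suc L) = 0" by (simp add: g_def qbinom_out)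

lemma g_0: "g a L 0 = 1" using q0 by (simp add: g_def qbinom_0)

lemma F_shift: "g a L 0 + (\<Sum>n\<le>L. g a L (Suc n)) = F a L"
proof -
  have "g a L 0 + (\<Sum>n\<le>L. g a L (Suc n)) = (\<Sum>n\<le>Suc L. g a L n)"
    by (rule sum.atMost_Suc_shift[symmetric])
  also have "\<dots> = F a L" by (simp add: F_def g_top)
  finally show ?thesis .
qed

lemma pn1: "qbinom q (int L + 1) (int n + 1) = qbinom q (int L) (int n) + q ^ (n+1) * qbinom q (int L) (int n + 1)"
proof -
  have "qbinom q (int L + 1) (int n + 1) = qbinom q (int L + 1 - 1) (int n + 1 - 1) + q powr (of_int (int n + 1)) * qbinom q (int L + 1 - 1) (int n + 1)"
    by (rule qbinom_pascal1) simp
  moreover have "q powr (of_int (int n + 1)) = q ^ (n+1)"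
  proof -
    have "(of_int (int n + 1) :: real) = real (n+1)" by simp
    then show ?thesis by (simp only: powr_realpow[OF q0])
  qed
  ultimately show ?thesis by simp
qed

lemma pn2: "qbinom q (int L + 1) (int n + 1) = qbinom q (int L) (int n + 1) + q ^ (L - n) * qbinom q (int L) (int n)"
proof (cases "n \<le> L")
  case True
  have "qbinom q (int L + 1) (int n + 1) = qbinom q (int L + 1 - 1) (int n + 1) + q powr (of_int (int L + 1 - (int n + 1))) * qbinom q (int L + 1 - 1) (int n + 1 - 1)"
    by (rule qbinom_pascal2) simp
  moreover have "q powr (of_int (int L + 1 - (int n + 1))) = q ^ (L - n)"
  proof -
    have "(of_int (int L + 1 - (int n + 1)) :: real) = real (L - n)" using True by simp
    then show ?thesis by (simp only: powr_realpow[OF q0])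
  qed
  ultimately show ?thesis by simp
next
  case False
  then show ?thesis by (simp add: qbinom_out)
qed

lemma pn1': "qbinom q (int (Suc L)) (int (Suc n)) = qbinom q (int L) (int n) + q ^ (n+1) * qbinom q (int L) (int (Suc n))"
proof -
  have "int (Suc L) = int L + 1" "int (Suc n) = int n + 1" by simp_all
  then show ?thesis by (simp only: pn1)
qed

lemma pn2': "qbinom q (int (Suc L)) (int (Suc n)) = qbinom q (int L) (int (Suc n)) + q ^ (L - n) * qbinom q (int L) (int n)"
proof -
  have "int (Suc L) = int L + 1" "int (Suc n) = int n + 1" by simp_all
  then show ?thesis by (simp only: pn2)
qed

lemma F1: "F a (Suc L) = F a L + q ^ (L+1+a) * F (Suc a) L"
proof -
  have "F a (Suc L) = g a (Suc L) 0 + (\<Sum>n\<le>L. g a (Suc L) (Suc n))"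
    unfolding F_def by (rule sum.atMost_Suc_shift)
  also have "(\<Sum>n\<le>L. g a (Suc L) (Suc n)) = (\<Sum>n\<le>L. g a L (Suc n) + q ^ (L+1+a) * g (Suc a) L n)"
  proof (rule sum.cong[OF refl])
    fix n assume "n \<in> {..L}"
    then have nL: "n \<le> L" by simp
    have ex: "Suc n * Suc n + a * Suc n + (L - n) = n*n + Suc a * n + (L+1+a)"
      using nL by (simp add: algebra_simps)
    have "g a (Suc L) (Suc n) = q ^ (Suc n * Suc n + a * Suc n) * (qbinom q (int L) (int (Suc n)) + q ^ (L - n) * qbinom q (int L) (int n))"
      unfolding g_def pn2' ..
    also have "\<dots> = g a L (Suc n) + q ^ (Suc n * Suc n + a * Suc n + (L - n)) * qbinom q (int L) (int n)"
      by (simp add: g_def power_add algebra_simps)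
    also have "\<dots> = g a L (Suc n) + q ^ (L+1+a) * g (Suc a) L n"
      unfolding ex by (simp add: g_def power_add algebra_simps)
    finally show "g a (Suc L) (Suc n) = g a L (Suc n) + q ^ (L+1+a) * g (Suc a) L n" .
  qed
  finally show ?thesis
    using F_shift[of a L] by (simp add: sum.distrib sum_distrib_left[symmetric] g_0 F_def[of "Suc a"])
qed

lemma F3: "F a (Suc L) = F (Suc a) L + q ^ (Suc a) * F (Suc (Suc a)) L"
proof -
  have "F a (Suc L) = g a (Suc L) 0 + (\<Sum>n\<le>L. g a (Suc L) (Suc n))"
    unfolding F_def by (rule sum.atMost_Suc_shift)
  also have "(\<Sum>n\<le>L. g a (Suc L) (Suc n)) = (\<Sum>n\<le>L. g (Suc a) L (Suc n) + q ^ (Suc a) * g (Suc (Suc a)) L n)"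
  proof (rule sum.cong[OF refl])
    fix n
    have ex1: "Suc n * Suc n + a * Suc n = Suc a + (n * n + Suc (Suc a) * n)"
      by (simp add: algebra_simps)
    have ex2: "Suc n * Suc n + a * Suc n + (n+1) = Suc n * Suc n + Suc a * Suc n"
      by (simp add: algebra_simps)
    have "g a (Suc L) (Suc n) = q ^ (Suc n * Suc n + a * Suc n) * (qbinom q (int L) (int n) + q ^ (n+1) * qbinom q (int L) (int (Suc n)))"
      unfolding g_def pn1' ..
    also have "\<dots> = q ^ (Suc n * Suc n + a * Suc n) * qbinom q (int L) (int n) + q ^ (Suc n * Suc n + a * Suc n + (n+1)) * qbinom q (int L) (int (Suc n))"
      by (simp add: power_add algebra_simps)
    also have "\<dots> = g (Suc a) L (Suc n) + q ^ (Suc a) * g (Suc (Suc a)) L n"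
      unfolding ex2 unfolding ex1 by (simp add: g_def power_add algebra_simps)
    finally show "g a (Suc L) (Suc n) = g (Suc a) L (Suc n) + q ^ (Suc a) * g (Suc (Suc a)) L n" .
  qed
  finally show ?thesis
    using F_shift[of "Suc a" L] g_0 by (simp add: sum.distrib sum_distrib_left[symmetric] F_def[of "Suc (Suc a)"])
qed

lemma F_rec:
  "F 0 (Suc L) = F 0 L + q ^ (Suc L) * F 1 L"
  "F 1 (Suc L) = F 1 L + q ^ (Suc L) * (F 0 (Suc L) - F 1 L)"
proof -
  show "F 0 (Suc L) = F 0 L + q ^ (Suc L) * F 1 L" using F1[of 0 L] by simp
  have b1: "F 1 (Suc L) = F 1 L + q ^ (L+2) * F 2 L" using F1[of 1 L] by (simp add: numeral_2_eq_2)
  have b2: "F 0 (Suc L) = F 1 L + q * F 2 L" using F3[of 0 L] by (simp add: numeral_2_eq_2)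
  have "q ^ (L+2) * F 2 L = q ^ Suc L * (q * F 2 L)" by (simp add: power_add algebra_simps numeral_2_eq_2)
  then show "F 1 (Suc L) = F 1 L + q ^ (Suc L) * (F 0 (Suc L) - F 1 L)" using b1 b2 by simp
qed

lemma supp00: "supp 0 0 = {0}" by (auto simp: supp_def)
lemma supp01: "supp 0 1 = {0}" by (auto simp: supp_def)

lemma main_ind: "F 0 L = h 1 (int L) (int L) \<and> F 1 L = h 3 (int L) (int L + 1)"
proof (induction L)
  case 0
  have "F 0 0 = 1" "F 1 0 = 1" by (simp_all add: F_def g_0)
  moreover have "h 1 0 0 = 1" "h 3 0 1 = 1"
    using q0 by (simp_all add: h_def supp00 supp01 tm_def qbinom_0)
  ultimately show ?case by simp
next
  case (Suc L)
  have pw: "q powr (of_int (int L + 1)) = q ^ Suc L"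
  proof -
    have "(of_int (int L + 1) :: real) = real (Suc L)" by simp
    then show ?thesis by (simp only: powr_realpow[OF q0])
  qed
  have A: "h 1 (int L + 1) (int L + 1) = h 1 (int L) (int L) + q ^ Suc L * h 3 (int L) (int L + 1)"
    using recA[of "int L + 1"] pw by simp
  have B: "h 3 (int L + 1) (int L + 1 + 1) = h 3 (int L) (int L + 1) + q ^ Suc L * (h 1 (int L + 1) (int L + 1) - h 3 (int L) (int L + 1))"
    using recB[of "int L + 1"] pw by simp
  have IH0: "F 0 L = h 1 (int L) (int L)" and IH1: "F 1 L = h 3 (int L) (int L + 1)"
    using Suc.IH by simp_all
  have f0: "F 0 (Suc L) = h 1 (int L + 1) (int L + 1)"
    by (simp only: F_rec(1) IH0 IH1 A)
  have f1: "F 1 (Suc L) = h 3 (int L + 1) (int L + 1 + 1)"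
    by (simp only: F_rec(2) f0 IH1 B)
  have "int (Suc L) = int L + 1" by simp
  then show ?case using f0 f1 by (simp only:)
qed

end


theorem mainTheorem7:
  fixes q :: real and L :: nat
  assumes "0 < q" and "q < 1"
  shows "G q (int L + 1) (int L) (1/2) 2 2
           = (\<Sum>j \<in> {j::int. 0 \<le> int L - 2 * j \<and> int L - 2 * j \<le> 2 * int L + 1}.
                (-1) powi j * q powr (real_of_int (j * (5 * j + 3)) / 2)
                * qbinom q (2 * int L + 1) (int L - 2 * j))
       \<and> (\<Sum>j \<in> {j::int. 0 \<le> int L - 2 * j \<and> int L - 2 * j \<le> 2 * int L + 1}.
                (-1) powi j * q powr (real_of_int (j * (5 * j + 3)) / 2)
                * qbinom q (2 * int L + 1) (int L - 2 * j))
         = (\<Sum>n\<le>L. q ^ (n * (n + 1)) * qbinom q (int L) (int n))"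
proof -
  have ra: "real_of_rat (1/2) = 1/2" "real_of_rat 2 = 2"
    by (simp_all add: of_rat_divide)
  have e1: "G q (int L + 1) (int L) (1/2) 2 2 = h q (-3) (int L + 1) (int L)"
    unfolding G_def h_def[OF assms]
  proof (rule sum.cong)
    show "{j. 0 \<le> int L + 1 - int 2 * j \<and> int L + 1 - int 2 * j \<le> int L + (int L + 1)} = supp (int L + 1) (int L)"
      by (auto simp: supp_def[OF assms])
  next
    fix j assume "j \<in> supp (int L + 1) (int L)"
    have ex: "1 / 2 * real 2 * real_of_int j * ((real_of_rat (1/2) + real_of_rat 2) * real_of_int j + real_of_rat (1/2) - real_of_rat 2)
        = real_of_int (j * (5 * j + - 3)) / 2"
      unfolding ra by (simp add: field_simps)
    have qb: "qbinom q (int L + (int L + 1)) (int L + 1 - int 2 * j) = qbinom q (int L + 1 + int L) (int L + 1 - 2 * j)"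
      by (simp add: algebra_simps)
    show "(-1) powi j * q powr (1 / 2 * real 2 * real_of_int j * ((real_of_rat (1/2) + real_of_rat 2) * real_of_int j + real_of_rat (1/2) - real_of_rat 2))
        * qbinom q (int L + (int L + 1)) (int L + 1 - int 2 * j) = tm q (-3) (int L + 1) (int L) j"
      unfolding ex qb tm_def[OF assms] ..
  qed
  have e2: "(\<Sum>j \<in> {j::int. 0 \<le> int L - 2 * j \<and> int L - 2 * j \<le> 2 * int L + 1}.
                (-1) powi j * q powr (real_of_int (j * (5 * j + 3)) / 2)
                * qbinom q (2 * int L + 1) (int L - 2 * j)) = h q 3 (int L) (int L + 1)"
    unfolding h_def[OF assms]
  proof (rule sum.cong)
    show "{j::int. 0 \<le> int L - 2 * j \<and> int L - 2 * j \<le> 2 * int L + 1} = supp (int L) (int L + 1)"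
      by (auto simp: supp_def[OF assms])
  next
    fix j
    have qb: "qbinom q (2 * int L + 1) (int L - 2 * j) = qbinom q (int L + (int L + 1)) (int L - 2 * j)"
      by (simp add: algebra_simps)
    show "(-1) powi j * q powr (real_of_int (j * (5 * j + 3)) / 2) * qbinom q (2 * int L + 1) (int L - 2 * j)
       = tm q 3 (int L) (int L + 1) j"
      unfolding qb tm_def[OF assms] ..
  qed
  have e3: "(\<Sum>n\<le>L. q ^ (n * (n + 1)) * qbinom q (int L) (int n)) = F q 1 L"
    unfolding F_def[OF assms] g_def[OF assms] by (simp add: algebra_simps)
  have r: "h q (-3) (int L + 1) (int L) = h q 3 (int L) (int L + 1)"
    using Refl[OF assms, of "-3" "int L + 1" "int L"] by simp
  have m: "F q 1 L = h q 3 (int L) (int L + 1)"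
    using main_ind[OF assms, of L] by simp
  show ?thesis unfolding e1 e2 e3 r m by simp
qed

end
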